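(* Let $\nu\ge1$, $\omega>0$, $\lambda_1,\dots,\lambda_\nu\ge0$, $c_{\omega,\lambda}=(\omega^2+4\sum_{j=1}^\nu\lambda_j)^{1/2}$, $L$ a positive integer, $\Lambda_L=(-L,L]^\nu\cap\mathbb Z^\nu$, $\Lambda_L^*=\{\pi x/L:x\in\Lambda_L\}$, $\gamma(k)=\sqrt{\omega^2+4\sum_j\lambda_j\sin^2(k_j/2)}$, and define for $x\in\Lambda_L$, $t\in\mathbb R$ $$h^{(L)}_{1,t}(x)=\frac i2\,\mathrm{Im}\Big[\frac1{|\Lambda_L|}\sum_{k\in\Lambda_L^*}\Big(\gamma(k)+\frac1{\gamma(k)}\Big)e^{ik\cdot x-2i\gamma(k)t}\Big]+\mathrm{Re}\Big[\frac1{|\Lambda_L|}\sum_{k\in\Lambda_L^*}e^{ik\cdot x-2i\gamma(k)t}\Big],$$ $$h^{(L)}_{2,t}(x)=\frac i2\,\mathrm{Im}\Big[\frac1{|\Lambda_L|}\sum_{k\in\Lambda_L^*}\Big(\gamma(k)-\frac1{\gamma(k)}\Big)e^{ik\cdot x-2i\gamma(k)t}\Big].$$ Then for $m=1,2$, all $\mu>0$, $t\in\mathbb R$, $x\in\Lambda_L$ and every $L$, $$|h^{(L)}_{m,t}(x)|\le\Big(1+\tfrac12c_{\omega,\lambda}e^{\mu/2}+\tfrac12c_{\omega,\lambda}^{-1}\Big)e^{-\mu\left(|x|-c_{\omega,\lambda}\max\left(\frac2\mu,e^{(\mu/2)+1}\right)|t|\right)},$$ where $|x|=\sum_{j=1}^\nu|x_j|$.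 *)

theory Defs
  imports Complex_Main
begin

text \<open>Dimension nu = CARD('n) (at least 1, since types are nonempty).
  Sites of Z^nu are functions 'n => int.\<close>

definition c_wl :: "real \<Rightarrow> ('n::finite \<Rightarrow> real) \<Rightarrow> real" where
  "c_wl \<omega> lam = sqrt (\<omega>^2 + 4 * (\<Sum>j\<in>UNIV. lam j))"

definition gam :: "real \<Rightarrow> ('n::finite \<Rightarrow> real) \<Rightarrow> ('n \<Rightarrow> real) \<Rightarrow> real" where
  "gam \<omega> lam k = sqrt (\<omega>^2 + 4 * (\<Sum>j\<in>UNIV. lam j * (sin (k j / 2))^2))"

definition Lam :: "nat \<Rightarrow> ('n::finite \<Rightarrow> int) set" where
  "Lam L = {x. \<forall>j. - int L < x j \<and> x j \<le> int L}"

definition Lam_star :: "nat \<Rightarrow> ('n::finite \<Rightarrow> real) set" where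
  "Lam_star L = (\<lambda>x j. pi * real_of_int (x j) / real L) ` Lam L"

definition dotp :: "('n::finite \<Rightarrow> real) \<Rightarrow> ('n \<Rightarrow> int) \<Rightarrow> real" where
  "dotp k x = (\<Sum>j\<in>UNIV. k j * real_of_int (x j))"

definition l1norm :: "('n::finite \<Rightarrow> int) \<Rightarrow> real" where
  "l1norm x = (\<Sum>j\<in>UNIV. \<bar>real_of_int (x j)\<bar>)"

definition avg :: "real \<Rightarrow> ('n::finite \<Rightarrow> real) \<Rightarrow> nat \<Rightarrow> (('n \<Rightarrow> real) \<Rightarrow> real)
    \<Rightarrow> real \<Rightarrow> ('n \<Rightarrow> int) \<Rightarrow> complex" where
  "avg \<omega> lam L g t x = (1 / of_nat (card (Lam L :: ('n \<Rightarrow> int) set))) *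
     (\<Sum>k\<in>Lam_star L. complex_of_real (g k) *
        exp (\<i> * complex_of_real (dotp k x) - 2 * \<i> * complex_of_real (gam \<omega> lam k) * complex_of_real t))"

definition h1 :: "real \<Rightarrow> ('n::finite \<Rightarrow> real) \<Rightarrow> nat \<Rightarrow> real \<Rightarrow> ('n \<Rightarrow> int) \<Rightarrow> complex" where
  "h1 \<omega> lam L t x =
     (\<i> / 2) * complex_of_real (Im (avg \<omega> lam L (\<lambda>k. gam \<omega> lam k + 1 / gam \<omega> lam k) t x))
     + complex_of_real (Re (avg \<omega> lam L (\<lambda>k. 1) t x))"

definition h2 :: "real \<Rightarrow> ('n::finite \<Rightarrow> real) \<Rightarrow> nat \<Rightarrow> real \<Rightarrow> ('n \<Rightarrow> int) \<Rightarrow> complex" where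
  "h2 \<omega> lam L t x =
     (\<i> / 2) * complex_of_real (Im (avg \<omega> lam L (\<lambda>k. gam \<omega> lam k - 1 / gam \<omega> lam k) t x))"

end

theory Submission imports Defs "HOL-Library.FuncSet" begin

definition kk :: "nat \<Rightarrow> ('n::finite \<Rightarrow> int) \<Rightarrow> ('n \<Rightarrow> real)" where
  "kk L n = (\<lambda>j. pi * real_of_int (n j) / real L)"

definition EE :: "nat \<Rightarrow> ('n::finite \<Rightarrow> int) \<Rightarrow> ('n \<Rightarrow> int) \<Rightarrow> complex" where
  "EE L n y = cis (pi * real_of_int (\<Sum>j\<in>UNIV. n j * y j) / real L)"

lemma EE_add: "EE L n (\<lambda>j. y j + z j) = EE L n y * EE L n z"
  by (simp add: EE_def cis_mult sum.distrib distrib_left add_divide_distrib)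

lemma Lam_finite: "finite (Lam L :: ('n::finite \<Rightarrow> int) set)"
proof -
  have "Lam L = PiE UNIV (\<lambda>_::'n. {-int L<..int L})"
    by (auto simp: Lam_def PiE_def extensional_def)
  thus ?thesis by (simp add: finite_PiE)
qed

lemma zero_Lam: "L > 0 \<Longrightarrow> (\<lambda>_. 0::int) \<in> Lam L"
  by (simp add: Lam_def)

lemma Lam_upd: "a \<in> Lam L \<Longrightarrow> - int L < v \<Longrightarrow> v \<le> int L \<Longrightarrow> a(j := v) \<in> Lam L"
  by (auto simp: Lam_def)

lemma cis_shift_int: "cis (a + 2 * pi * real_of_int m) = cis a"
  by (simp add: cis_mult[symmetric])

lemma char_sum_zero:
  fixes y :: "'n::finite \<Rightarrow> int"
  assumes L: "L > 0" and nd: "\<not> (2 * int L dvd y j)"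
  shows "(\<Sum>n\<in>Lam L. EE L n y) = 0"
proof -
  define \<tau> where "\<tau> n = n(j := if n j = int L then 1 - int L else n j + 1)" for n :: "'n \<Rightarrow> int"
  define \<tau>' where "\<tau>' n = n(j := if n j = 1 - int L then int L else n j - 1)" for n :: "'n \<Rightarrow> int"
  define \<zeta> where "\<zeta> = cis (pi * real_of_int (y j) / real L)"
  have key: "EE L (\<tau> n) y = EE L n y * \<zeta>" for n
  proof -
    define d where "d = (if n j = int L then 1 - 2 * int L else 1)"
    have "(\<Sum>i\<in>UNIV. \<tau> n i * y i) = (\<Sum>i\<in>UNIV. n i * y i + (if i = j then d * y j else 0))"
      by (rule sum.cong) (auto simp: \<tau>_def d_def algebra_simps)
    also have "\<dots> = (\<Sum>i\<in>UNIV. n i * y i) + d * y j"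
      by (simp add: sum.distrib)
    finally have s: "(\<Sum>i\<in>UNIV. \<tau> n i * y i) = (\<Sum>i\<in>UNIV. n i * y i) + d * y j" .
    show ?thesis
    proof (cases "n j = int L")
      case True
      have "pi * real_of_int ((\<Sum>i\<in>UNIV. n i * y i) + d * y j) / real L
          = (pi * real_of_int (\<Sum>i\<in>UNIV. n i * y i) / real L + pi * real_of_int (y j) / real L)
            + 2 * pi * real_of_int (- y j)"
        using L True by (simp add: d_def field_simps)
      then have "EE L (\<tau> n) y = cis ((pi * real_of_int (\<Sum>i\<in>UNIV. n i * y i) / real L + pi * real_of_int (y j) / real L)
            + 2 * pi * real_of_int (- y j))" using s by (simp add: EE_def)
      also have "\<dots> = EE L n y * \<zeta>" unfolding cis_shift_int by (simp add: EE_def \<zeta>_def cis_mult)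
      finally show ?thesis .
    next
      case False
      then show ?thesis using s by (simp add: EE_def \<zeta>_def cis_mult d_def add_divide_distrib distrib_left)
    qed
  qed
  have "(\<Sum>n\<in>Lam L. EE L (\<tau> n) y) = (\<Sum>n\<in>Lam L. EE L n y)"
  proof (rule sum.reindex_bij_witness[where i=\<tau>' and j=\<tau>])
    fix a :: "'n \<Rightarrow> int" assume a: "a \<in> Lam L"
    then have "- int L < a j" "a j \<le> int L" by (auto simp: Lam_def)
    then show "\<tau>' (\<tau> a) = a" "\<tau> a \<in> Lam L" using L
      by (auto simp: \<tau>_def \<tau>'_def fun_eq_iff intro!: Lam_upd[OF a])
  next
    fix a :: "'n \<Rightarrow> int" assume a: "a \<in> Lam L"
    then have "- int L < a j" "a j \<le> int L" by (auto simp: Lam_def)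
    then show "\<tau> (\<tau>' a) = a" "\<tau>' a \<in> Lam L" using L
      by (auto simp: \<tau>_def \<tau>'_def fun_eq_iff intro!: Lam_upd[OF a])
  qed simp
  then have "\<zeta> * (\<Sum>n\<in>Lam L. EE L n y) = (\<Sum>n\<in>Lam L. EE L n y)"
    by (simp add: key sum_distrib_left mult.commute)
  moreover have "\<zeta> \<noteq> 1"
  proof
    assume "\<zeta> = 1"
    then have "cos (pi * real_of_int (y j) / real L) = 1"
      unfolding \<zeta>_def by (metis cis.sel(1) one_complex.sel(1))
    then obtain m :: int where m: "pi * real_of_int (y j) / real L = real_of_int m * 2 * pi"
      using cos_one_2pi_int by auto
    then have "real_of_int (y j) = real_of_int (2 * int L * m)" using L
      by (simp add: field_simps)
    then have "y j = 2 * int L * m" by linarith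
    with nd show False by simp
  qed
  ultimately show ?thesis
    by (metis mult_cancel_right1 mult.commute)
qed


definition rng :: "nat \<Rightarrow> nat \<Rightarrow> (('n::finite \<Rightarrow> int) \<Rightarrow> complex) \<Rightarrow> bool" where
  "rng L N F \<longleftrightarrow> (\<forall>y::'n \<Rightarrow> int. (\<forall>q::'n \<Rightarrow> int. int N < (\<Sum>j\<in>UNIV. \<bar>y j - 2 * int L * q j\<bar>)) \<longrightarrow>
      (\<Sum>n\<in>Lam L. F n * EE L n y) = 0)"

definition ev :: "'n \<Rightarrow> 'n \<Rightarrow> int" where "ev j = (\<lambda>i. if i = j then 1 else 0)"

lemma rng_base:
  assumes L: "L > 0"
  shows "rng L 0 (\<lambda>n::'n::finite \<Rightarrow> int. 1)"
  unfolding rng_def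
proof (intro allI impI)
  fix y :: "'n \<Rightarrow> int"
  assume H: "\<forall>q::'n \<Rightarrow> int. int 0 < (\<Sum>j\<in>UNIV. \<bar>y j - 2 * int L * q j\<bar>)"
  have "\<exists>j. \<not> (2 * int L dvd y j)"
  proof (rule ccontr)
    assume "\<not> ?thesis"
    then have d: "\<forall>j. 2 * int L dvd y j" by blast
    have "(\<Sum>j\<in>UNIV. \<bar>y j - 2 * int L * (y j div (2 * int L))\<bar>) = 0"
      using d by (simp add: dvd_mult_div_cancel)
    with H show False by (metis less_irrefl of_nat_0)
  qed
  then obtain j where "\<not> (2 * int L dvd y j)" by blast
  from char_sum_zero[of L y j, OF L this] show "(\<Sum>n\<in>Lam L. 1 * EE L n y) = 0" by simp
qed

lemma l1_shift:
  fixes y q :: "'n::finite \<Rightarrow> int"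
  assumes s: "\<bar>s\<bar> = 1"
  shows "(\<Sum>i\<in>UNIV. \<bar>y i - 2 * int L * q i\<bar>) \<le> (\<Sum>i\<in>UNIV. \<bar>y i + s * ev j i - 2 * int L * q i\<bar>) + 1"
proof -
  have "(\<Sum>i\<in>UNIV. \<bar>y i - 2 * int L * q i\<bar>) \<le> (\<Sum>i\<in>UNIV. \<bar>y i + s * ev j i - 2 * int L * q i\<bar> + (if i = j then 1 else 0))"
    by (rule sum_mono) (use s in \<open>auto simp: ev_def\<close>)
  also have "\<dots> = (\<Sum>i\<in>UNIV. \<bar>y i + s * ev j i - 2 * int L * q i\<bar>) + 1"
    by (simp add: sum.distrib)
  finally show ?thesis .
qed

lemma rng_step:
  fixes F :: "('n::finite \<Rightarrow> int) \<Rightarrow> complex"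
  assumes R: "rng L N F"
  shows "rng L (Suc N) (\<lambda>n. (a + (\<Sum>j\<in>UNIV. w j * (2 - EE L n (ev j) - EE L n (\<lambda>i. - ev j i)))) * F n)"
  unfolding rng_def
proof (intro allI impI)
  fix y :: "'n \<Rightarrow> int"
  assume H: "\<forall>q::'n \<Rightarrow> int. int (Suc N) < (\<Sum>j\<in>UNIV. \<bar>y j - 2 * int L * q j\<bar>)"
  define S where "S z = (\<Sum>n\<in>Lam L. F n * EE L n z)" for z
  have Sy: "S y = 0"
  proof -
    have "\<forall>q::'n \<Rightarrow> int. int N < (\<Sum>j\<in>UNIV. \<bar>y j - 2 * int L * q j\<bar>)"
    proof
      fix q :: "'n \<Rightarrow> int"
      from H[rule_format, of q] show "int N < (\<Sum>j\<in>UNIV. \<bar>y j - 2 * int L * q j\<bar>)" by simp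
    qed
    then show ?thesis using R unfolding rng_def S_def by auto
  qed
  have Sp: "S (\<lambda>i. y i + ev j i) = 0" for j
  proof -
    have "\<forall>q::'n \<Rightarrow> int. int N < (\<Sum>i\<in>UNIV. \<bar>y i + ev j i - 2 * int L * q i\<bar>)"
    proof
      fix q :: "'n \<Rightarrow> int"
      from l1_shift[of 1 y L q j] H[rule_format, of q] show "int N < (\<Sum>i\<in>UNIV. \<bar>y i + ev j i - 2 * int L * q i\<bar>)"
        by simp
    qed
    then show ?thesis using R unfolding rng_def S_def by auto
  qed
  have Sm: "S (\<lambda>i. y i + - ev j i) = 0" for j
  proof -
    have "\<forall>q::'n \<Rightarrow> int. int N < (\<Sum>i\<in>UNIV. \<bar>y i + - ev j i - 2 * int L * q i\<bar>)"
    proof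
      fix q :: "'n \<Rightarrow> int"
      from l1_shift[of "-1" y L q j] H[rule_format, of q] show "int N < (\<Sum>i\<in>UNIV. \<bar>y i + - ev j i - 2 * int L * q i\<bar>)"
        by simp
    qed
    then show ?thesis using R unfolding rng_def S_def by auto
  qed
  have Sm': "S (\<lambda>i. y i - ev j i) = 0" for j using Sm[of j] by simp
  define A where "A n (j::'n) = EE L n (ev j)" for n j
  define B where "B n (j::'n) = EE L n (\<lambda>i. - ev j i)" for n j
  have pt: "(a + (\<Sum>j\<in>UNIV. w j * (2 - A n j - B n j))) * F n * EE L n y
      = a * (F n * EE L n y) + (\<Sum>j\<in>UNIV. w j * (2 * (F n * EE L n y) - F n * EE L n (\<lambda>i. y i + ev j i)
           - F n * EE L n (\<lambda>i. y i + - ev j i)))" for n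
  proof -
    have "(a + (\<Sum>j\<in>UNIV. w j * (2 - A n j - B n j))) * F n * EE L n y
        = a * (F n * EE L n y) + (\<Sum>j\<in>UNIV. w j * (2 - A n j - B n j)) * (F n * EE L n y)"
      by (simp add: distrib_right mult.assoc)
    also have "(\<Sum>j\<in>UNIV. w j * (2 - A n j - B n j)) * (F n * EE L n y)
        = (\<Sum>j\<in>UNIV. w j * (2 - A n j - B n j) * (F n * EE L n y))"
      by (rule sum_distrib_right)
    also have "\<dots> = (\<Sum>j\<in>UNIV. w j * (2 * (F n * EE L n y) - F n * EE L n (\<lambda>i. y i + ev j i)
           - F n * EE L n (\<lambda>i. y i + - ev j i)))"
    proof (rule sum.cong[OF refl])
      fix j
      have e1: "EE L n (\<lambda>i. y i + ev j i) = EE L n y * A n j" unfolding A_def by (rule EE_add)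
      have e2: "EE L n (\<lambda>i. y i + - ev j i) = EE L n y * B n j" unfolding B_def by (rule EE_add)
      show "w j * (2 - A n j - B n j) * (F n * EE L n y) = w j * (2 * (F n * EE L n y) - F n * EE L n (\<lambda>i. y i + ev j i)
           - F n * EE L n (\<lambda>i. y i + - ev j i))"
        unfolding e1 e2 by (simp add: field_simps)
    qed
    finally show ?thesis .
  qed
  have "(\<Sum>n\<in>Lam L. (a + (\<Sum>j\<in>UNIV. w j * (2 - A n j - B n j))) * F n * EE L n y)
      = (\<Sum>n\<in>Lam L. a * (F n * EE L n y)) + (\<Sum>n\<in>Lam L. \<Sum>j\<in>UNIV. w j * (2 * (F n * EE L n y) - F n * EE L n (\<lambda>i. y i + ev j i)
           - F n * EE L n (\<lambda>i. y i + - ev j i)))"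
    unfolding pt by (rule sum.distrib)
  also have "\<dots> = a * S y + (\<Sum>j\<in>UNIV. \<Sum>n\<in>Lam L. w j * (2 * (F n * EE L n y) - F n * EE L n (\<lambda>i. y i + ev j i)
           - F n * EE L n (\<lambda>i. y i + - ev j i)))"
    by (simp add: S_def sum_distrib_left sum.swap[of _ "Lam L" UNIV])
  also have "\<dots> = a * S y + (\<Sum>j\<in>UNIV. w j * (2 * S y - S (\<lambda>i. y i + ev j i) - S (\<lambda>i. y i + - ev j i)))"
  proof (rule arg_cong[where f="\<lambda>u. a * S y + u"], rule sum.cong[OF refl])
    fix j
    have "(\<Sum>n\<in>Lam L. w j * (2 * (F n * EE L n y) - F n * EE L n (\<lambda>i. y i + ev j i) - F n * EE L n (\<lambda>i. y i + - ev j i)))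
       = w j * (\<Sum>n\<in>Lam L. 2 * (F n * EE L n y) - F n * EE L n (\<lambda>i. y i + ev j i) - F n * EE L n (\<lambda>i. y i + - ev j i))"
      by (rule sum_distrib_left[symmetric])
    also have "(\<Sum>n\<in>Lam L. 2 * (F n * EE L n y) - F n * EE L n (\<lambda>i. y i + ev j i) - F n * EE L n (\<lambda>i. y i + - ev j i))
       = 2 * S y - S (\<lambda>i. y i + ev j i) - S (\<lambda>i. y i + - ev j i)"
      unfolding S_def sum_subtractf by (simp only: sum_distrib_left)
    finally show "(\<Sum>n\<in>Lam L. w j * (2 * (F n * EE L n y) - F n * EE L n (\<lambda>i. y i + ev j i) - F n * EE L n (\<lambda>i. y i + - ev j i)))
       = w j * (2 * S y - S (\<lambda>i. y i + ev j i) - S (\<lambda>i. y i + - ev j i))" .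
  qed
  also have "\<dots> = 0" by (simp add: Sy Sp Sm')
  finally have "(\<Sum>n\<in>Lam L. (a + (\<Sum>j\<in>UNIV. w j * (2 - A n j - B n j))) * F n * EE L n y) = 0" .
  then show "(\<Sum>n\<in>Lam L. (a + (\<Sum>j\<in>UNIV. w j * (2 - EE L n (ev j) - EE L n (\<lambda>i. - ev j i)))) * F n * EE L n y) = 0"
    by (simp add: A_def B_def)
qed


definition gn :: "real \<Rightarrow> ('n::finite \<Rightarrow> real) \<Rightarrow> nat \<Rightarrow> ('n \<Rightarrow> int) \<Rightarrow> real" where
  "gn \<omega> lam L n = gam \<omega> lam (kk L n)"

lemma EE_th: "EE L n x = cis (dotp (kk L n) x)"
  unfolding EE_def dotp_def kk_def
  by (simp add: sum_divide_distrib sum_distrib_left mult.assoc)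

lemma EE_ev: "EE L n (ev j) = cis (kk L n j)" "EE L n (\<lambda>i. - ev j i) = cis (- kk L n j)"
  unfolding EE_def kk_def ev_def by (simp_all add: if_distrib cong: if_cong)

lemma gn_sq:
  assumes lam: "\<forall>j. lam j \<ge> 0"
  shows "complex_of_real ((gn \<omega> lam L n)^2) = complex_of_real (\<omega>^2) +
     (\<Sum>j\<in>UNIV. complex_of_real (lam j) * (2 - EE L n (ev j) - EE L n (\<lambda>i. - ev j i)))"
proof -
  have nn: "0 \<le> \<omega>^2 + 4 * (\<Sum>j\<in>UNIV. lam j * (sin (kk L n j / 2))^2)"
    using lam by (intro add_nonneg_nonneg sum_nonneg mult_nonneg_nonneg) auto
  have "(gn \<omega> lam L n)^2 = \<omega>^2 + 4 * (\<Sum>j\<in>UNIV. lam j * (sin (kk L n j / 2))^2)"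
    unfolding gn_def gam_def using nn by simp
  moreover have "2 - cis a - cis (- a) = complex_of_real (4 * (sin (a / 2))^2)" for a
  proof -
    have "cos a = 1 - 2 * (sin (a/2))^2" using cos_double_sin[of "a/2"] by simp
    then show ?thesis by (simp add: complex_eq_iff)
  qed
  ultimately show ?thesis
    by (simp add: EE_ev sum_distrib_left mult.assoc mult.left_commute)
qed

lemma rng_pow:
  assumes L: "L > 0" and lam: "\<forall>j. lam j \<ge> 0"
  shows "rng L m (\<lambda>n::'n::finite \<Rightarrow> int. complex_of_real ((gn \<omega> lam L n)^2) ^ m)"
proof (induction m)
  case 0
  then show ?case using rng_base[OF L] by simp
next
  case (Suc m)
  from rng_step[OF Suc, of "complex_of_real (\<omega>^2)" "\<lambda>j. complex_of_real (lam j)"]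
  have "rng L (Suc m) (\<lambda>n. complex_of_real ((gn \<omega> lam L n)^2) * complex_of_real ((gn \<omega> lam L n)^2) ^ m)"
    unfolding gn_sq[OF lam, symmetric] .
  then show ?case by (simp only: power_Suc)
qed

lemma coord_le:
  fixes a q :: int
  assumes "- int L < a" "a \<le> int L"
  shows "\<bar>a\<bar> \<le> \<bar>a - 2 * int L * q\<bar>"
proof (cases "q = 0")
  case True then show ?thesis by simp
next
  case False
  then have "q \<ge> 1 \<or> q \<le> -1" by linarith
  then show ?thesis
  proof
    assume "q \<ge> 1"
    then have "int L * q \<ge> int L" by (simp add: mult_le_cancel_left1)
    then show ?thesis using assms by linarith
  next
    assume "q \<le> -1"
    then have "int L * q \<le> - int L" using mult_left_mono[of q "-1" "int L"] by simp
    then show ?thesis using assms by linarith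
  qed
qed

lemma D_vanish:
  fixes x :: "'n::finite \<Rightarrow> int"
  assumes L: "L > 0" and lam: "\<forall>j. lam j \<ge> 0" and x: "x \<in> Lam L"
    and m: "real m < l1norm x"
  shows "(\<Sum>n\<in>Lam L. (gn \<omega> lam L n)^(2*m) * cos (dotp (kk L n) x)) = 0"
proof -
  have "\<forall>q::'n \<Rightarrow> int. int m < (\<Sum>j\<in>UNIV. \<bar>x j - 2 * int L * q j\<bar>)"
  proof
    fix q :: "'n \<Rightarrow> int"
    have "(\<Sum>j\<in>UNIV. \<bar>x j\<bar>) \<le> (\<Sum>j\<in>UNIV. \<bar>x j - 2 * int L * q j\<bar>)"
      using x by (intro sum_mono coord_le) (auto simp: Lam_def)
    moreover have "real m < real_of_int (\<Sum>j\<in>UNIV. \<bar>x j\<bar>)" using m by (simp add: l1norm_def)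
    ultimately show "int m < (\<Sum>j\<in>UNIV. \<bar>x j - 2 * int L * q j\<bar>)" by linarith
  qed
  then have "(\<Sum>n\<in>Lam L. complex_of_real ((gn \<omega> lam L n)^2) ^ m * EE L n x) = 0"
    using rng_pow[OF L lam, of m \<omega>] unfolding rng_def by blast
  then have "Re (\<Sum>n\<in>Lam L. complex_of_real ((gn \<omega> lam L n)^2) ^ m * EE L n x) = 0" by simp
  then show ?thesis by (simp add: EE_th power_mult of_real_power[symmetric] del: of_real_power)
qed


lemma sin_shift_int: "sin (a + 2 * pi * real_of_int m) = sin a"
  using arg_cong[OF cis_shift_int[of a m], of Im] by simp

lemma sin_sum_zero:
  fixes x :: "'n::finite \<Rightarrow> int" and \<psi> :: "real \<Rightarrow> real"
  assumes L: "L > 0"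
  shows "(\<Sum>n\<in>Lam L. \<psi> (gn \<omega> lam L n) * sin (dotp (kk L n) x)) = 0"
proof -
  define \<sigma> where "\<sigma> n = (\<lambda>j. if n j = int L then int L else - n j)" for n :: "'n \<Rightarrow> int"
  have kkL: "n j = int L \<Longrightarrow> kk L n j = pi" for n :: "'n \<Rightarrow> int" and j
    using L by (simp add: kk_def)
  have g: "gn \<omega> lam L (\<sigma> n) = gn \<omega> lam L n" for n
  proof -
    have "(sin (kk L (\<sigma> n) j / 2))^2 = (sin (kk L n j / 2))^2" for j
    proof (cases "n j = int L")
      case True
      then have "\<sigma> n j = int L" by (simp add: \<sigma>_def)
      with True kkL show ?thesis by metis
    next
      case False
      then have "kk L (\<sigma> n) j = - kk L n j" by (simp add: \<sigma>_def kk_def)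
      then show ?thesis by simp
    qed
    then show ?thesis by (simp add: gn_def gam_def)
  qed
  have th: "sin (dotp (kk L (\<sigma> n)) x) = - sin (dotp (kk L n) x)" for n
  proof -
    define m where "m = (\<Sum>j\<in>UNIV. if n j = int L then x j else 0)"
    have "kk L (\<sigma> n) j * real_of_int (x j) = - (kk L n j * real_of_int (x j)) + 2 * pi * real_of_int (if n j = int L then x j else 0)" for j
    proof (cases "n j = int L")
      case True
      then have "\<sigma> n j = int L" by (simp add: \<sigma>_def)
      then have "kk L (\<sigma> n) j = pi" using kkL by blast
      with True kkL[of n j] show ?thesis by simp
    next
      case False
      then show ?thesis by (simp add: \<sigma>_def kk_def)
    qed
    then have "dotp (kk L (\<sigma> n)) x = - dotp (kk L n) x + 2 * pi * real_of_int m"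
      by (simp add: dotp_def m_def sum.distrib sum_distrib_left sum_negf sum_subtractf)
    then show ?thesis using sin_shift_int[of "- dotp (kk L n) x" m] by simp
  qed
  have inv: "\<sigma> (\<sigma> a) = a" and mem: "\<sigma> a \<in> Lam L" if a: "a \<in> Lam L" for a
  proof -
    from a have b: "- int L < a j \<and> a j \<le> int L" for j by (auto simp: Lam_def)
    show "\<sigma> (\<sigma> a) = a"
    proof
      fix j show "\<sigma> (\<sigma> a) j = a j" using b[of j] by (auto simp: \<sigma>_def)
    qed
    show "\<sigma> a \<in> Lam L" unfolding Lam_def
    proof (safe)
      fix j show "- int L < \<sigma> a j" "\<sigma> a j \<le> int L" using b[of j] L by (auto simp: \<sigma>_def)
    qed
  qed
  define S where "S = (\<Sum>n\<in>Lam L. \<psi> (gn \<omega> lam L n) * sin (dotp (kk L n) x))"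
  have "S = (\<Sum>n\<in>Lam L. \<psi> (gn \<omega> lam L (\<sigma> n)) * sin (dotp (kk L (\<sigma> n)) x))"
    unfolding S_def
    by (rule sum.reindex_bij_witness[where i=\<sigma> and j=\<sigma>]) (auto simp: inv mem)
  also have "\<dots> = - S" unfolding S_def by (simp add: g th sum_negf)
  finally show ?thesis unfolding S_def by simp
qed

lemma sums_abs_le:
  fixes f g :: "nat \<Rightarrow> real"
  assumes "f sums a" "g sums b" "\<And>k. \<bar>f k\<bar> \<le> g k"
  shows "\<bar>a\<bar> \<le> b"
proof -
  have sg: "summable g" using assms(2) by (rule sums_summable)
  have sf: "summable (\<lambda>k. \<bar>f k\<bar>)"
    by (rule summable_comparison_test[OF _ sg]) (use assms(3) in auto)
  have "\<bar>a\<bar> = \<bar>suminf f\<bar>" using assms(1) by (simp add: sums_iff)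
  also have "\<dots> \<le> (\<Sum>k. \<bar>f k\<bar>)" by (rule summable_rabs[OF sf])
  also have "\<dots> \<le> suminf g" by (rule suminf_le[OF assms(3) sf sg])
  also have "\<dots> = b" using assms(2) by (simp add: sums_iff)
  finally show ?thesis .
qed

lemma pow_ratio_le:
  fixes \<beta> z :: real
  assumes "\<beta> \<ge> 1" "z \<ge> 0" "p \<le> k"
  shows "z ^ k \<le> (\<beta> * z) ^ k / \<beta> ^ p"
proof -
  have "\<beta> ^ p \<le> \<beta> ^ k" using assms by (simp add: power_increasing)
  then have "\<beta> ^ p * z ^ k \<le> \<beta> ^ k * z ^ k" using assms by (simp add: mult_right_mono)
  moreover have "\<beta> ^ p > 0" using assms by simp
  ultimately show ?thesis by (simp add: power_mult_distrib field_simps)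
qed

lemma cos_series_bound:
  fixes G C :: "'a \<Rightarrow> real" and I :: "'a set"
  assumes fin: "finite I" and G: "\<And>i. i \<in> I \<Longrightarrow> 0 \<le> G i \<and> G i \<le> c"
    and C: "\<And>i. i \<in> I \<Longrightarrow> \<bar>C i\<bar> \<le> 1"
    and van: "\<And>m. m < X \<Longrightarrow> (\<Sum>i\<in>I. G i ^ (2*m) * C i) = 0"
    and \<beta>: "\<beta> \<ge> 1"
  shows "\<bar>\<Sum>i\<in>I. cos (2 * G i * t) * C i\<bar> \<le> real (card I) * exp (\<beta> * (2 * c * \<bar>t\<bar>)) / \<beta> ^ (2 * X)"
proof -
  define z where "z = 2 * c * \<bar>t\<bar>"
  have c0: "c \<ge> 0" if "I \<noteq> {}" using G that by fastforce
  define D where "D k = (\<Sum>i\<in>I. G i ^ k * C i)" for k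
  have Dle: "\<bar>D k\<bar> \<le> real (card I) * c ^ k" for k
  proof -
    have "\<bar>D k\<bar> \<le> (\<Sum>i\<in>I. \<bar>G i ^ k * C i\<bar>)" unfolding D_def by (rule sum_abs)
    also have "\<dots> \<le> (\<Sum>i\<in>I. c ^ k)"
    proof (rule sum_mono)
      fix i assume i: "i \<in> I"
      have "\<bar>G i ^ k * C i\<bar> = G i ^ k * \<bar>C i\<bar>" using G[OF i] by (simp add: abs_mult)
      also have "\<dots> \<le> c ^ k * 1"
        using G[OF i] C[OF i] by (intro mult_mono power_mono) auto
      finally show "\<bar>G i ^ k * C i\<bar> \<le> c ^ k" by simp
    qed
    finally show ?thesis by simp
  qed
  have sums1: "(\<lambda>k. \<Sum>i\<in>I. cos_coeff k * (2 * G i * t) ^ k * C i) sums (\<Sum>i\<in>I. cos (2 * G i * t) * C i)"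
    by (rule sums_sum, rule sums_mult2) (use cos_converges[where ?'a=real] in simp)
  have eq: "(\<Sum>i\<in>I. cos_coeff k * (2 * G i * t) ^ k * C i) = cos_coeff k * (2 * t) ^ k * D k" for k
    unfolding D_def by (simp add: sum_distrib_left power_mult_distrib mult_ac)
  have sums2: "(\<lambda>k. real (card I) / \<beta> ^ (2 * X) * ((\<beta> * z) ^ k /\<^sub>R fact k)) sums (real (card I) / \<beta> ^ (2 * X) * exp (\<beta> * z))"
    by (rule sums_mult, rule exp_converges)
  have nn: "0 \<le> real (card I) / \<beta> ^ (2 * X) * ((\<beta> * z) ^ k /\<^sub>R fact k)" for k
  proof (cases "I = {}")
    case False
    then show ?thesis using c0[OF False] \<beta> by (auto simp: z_def intro!: mult_nonneg_nonneg divide_nonneg_nonneg)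
  qed simp
  have bnd: "\<bar>cos_coeff k * (2 * t) ^ k * D k\<bar> \<le> real (card I) / \<beta> ^ (2 * X) * ((\<beta> * z) ^ k /\<^sub>R fact k)" for k
  proof (cases "odd k \<or> k < 2 * X")
    case True
    then show ?thesis
    proof
      assume "odd k" then show ?thesis using nn[of k] by (simp add: cos_coeff_def)
    next
      assume k: "k < 2 * X"
      show ?thesis
      proof (cases "odd k")
        case True then show ?thesis using nn[of k] by (simp add: cos_coeff_def)
      next
        case False
        then obtain m where "k = 2 * m" by (auto elim: evenE)
        with k van[of m] have "D k = 0" by (simp add: D_def)
        then show ?thesis using nn[of k] by simp
      qed
    qed
  next
    case False
    then have ev: "even k" and k: "2 * X \<le> k" by auto
    have I: "I \<noteq> {} \<or> D k = 0" by (auto simp: D_def)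
    have cc: "\<bar>cos_coeff k\<bar> = 1 / fact k" using ev by (simp add: cos_coeff_def abs_mult power_abs)
    have "\<bar>cos_coeff k * (2 * t) ^ k * D k\<bar> = (1 / fact k) * (2 * \<bar>t\<bar>) ^ k * \<bar>D k\<bar>"
      by (simp add: abs_mult cc power_abs)
    also have "\<dots> \<le> (1 / fact k) * (2 * \<bar>t\<bar>) ^ k * (real (card I) * c ^ k)"
      by (intro mult_left_mono Dle) auto
    also have "\<dots> = real (card I) / fact k * z ^ k"
      by (simp add: z_def power_mult_distrib)
    also have "\<dots> \<le> real (card I) / fact k * ((\<beta> * z) ^ k / \<beta> ^ (2 * X))"
    proof (cases "I = {}")
      case True then show ?thesis by simp
    next
      case False
      show ?thesis
        by (intro mult_left_mono pow_ratio_le \<beta> k) (use c0[OF False] in \<open>auto simp: z_def\<close>)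
    qed
    also have "\<dots> = real (card I) / \<beta> ^ (2 * X) * ((\<beta> * z) ^ k /\<^sub>R fact k)"
      by (simp add: divide_inverse mult_ac)
    finally show ?thesis .
  qed
  have "\<bar>\<Sum>i\<in>I. cos (2 * G i * t) * C i\<bar> \<le> real (card I) / \<beta> ^ (2 * X) * exp (\<beta> * z)"
    by (rule sums_abs_le[OF sums1 sums2]) (simp only: eq bnd)
  then show ?thesis by (simp add: z_def)
qed


lemma sin_series_bound:
  fixes G C :: "'a \<Rightarrow> real" and I :: "'a set"
  assumes fin: "finite I" and G: "\<And>i. i \<in> I \<Longrightarrow> 0 \<le> G i \<and> G i \<le> c"
    and C: "\<And>i. i \<in> I \<Longrightarrow> \<bar>C i\<bar> \<le> 1"
    and van: "\<And>m. m < X \<Longrightarrow> (\<Sum>i\<in>I. G i ^ (2*m) * C i) = 0"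
    and \<beta>: "\<beta> \<ge> 1" and X: "X \<ge> 1"
  shows "\<bar>\<Sum>i\<in>I. G i * sin (2 * G i * t) * C i\<bar> \<le> real (card I) * c * exp (\<beta> * (2 * c * \<bar>t\<bar>)) / \<beta> ^ (2 * X - 1)"
proof -
  define z where "z = 2 * c * \<bar>t\<bar>"
  have c0: "c \<ge> 0" if "I \<noteq> {}" using G that by fastforce
  define D where "D k = (\<Sum>i\<in>I. G i ^ k * C i)" for k
  have Dle: "\<bar>D k\<bar> \<le> real (card I) * c ^ k" for k
  proof -
    have "\<bar>D k\<bar> \<le> (\<Sum>i\<in>I. \<bar>G i ^ k * C i\<bar>)" unfolding D_def by (rule sum_abs)
    also have "\<dots> \<le> (\<Sum>i\<in>I. c ^ k)"
    proof (rule sum_mono)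
      fix i assume i: "i \<in> I"
      have "\<bar>G i ^ k * C i\<bar> = G i ^ k * \<bar>C i\<bar>" using G[OF i] by (simp add: abs_mult)
      also have "\<dots> \<le> c ^ k * 1"
        using G[OF i] C[OF i] by (intro mult_mono power_mono) auto
      finally show "\<bar>G i ^ k * C i\<bar> \<le> c ^ k" by simp
    qed
    finally show ?thesis by simp
  qed
  have sums1: "(\<lambda>k. \<Sum>i\<in>I. sin_coeff k * (2 * G i * t) ^ k * (G i * C i)) sums (\<Sum>i\<in>I. sin (2 * G i * t) * (G i * C i))"
    by (rule sums_sum, rule sums_mult2) (use sin_converges[where ?'a=real] in simp)
  have eq: "(\<Sum>i\<in>I. sin_coeff k * (2 * G i * t) ^ k * (G i * C i)) = sin_coeff k * (2 * t) ^ k * D (Suc k)" for k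
    unfolding D_def by (simp add: sum_distrib_left power_mult_distrib mult_ac)
  have sums2: "(\<lambda>k. real (card I) * c / \<beta> ^ (2 * X - 1) * ((\<beta> * z) ^ k /\<^sub>R fact k)) sums (real (card I) * c / \<beta> ^ (2 * X - 1) * exp (\<beta> * z))"
    by (rule sums_mult, rule exp_converges)
  have nn: "0 \<le> real (card I) * c / \<beta> ^ (2 * X - 1) * ((\<beta> * z) ^ k /\<^sub>R fact k)" for k
  proof (cases "I = {}")
    case False
    then show ?thesis using c0[OF False] \<beta> by (auto simp: z_def intro!: mult_nonneg_nonneg divide_nonneg_nonneg)
  qed simp
  have bnd: "\<bar>sin_coeff k * (2 * t) ^ k * D (Suc k)\<bar> \<le> real (card I) * c / \<beta> ^ (2 * X - 1) * ((\<beta> * z) ^ k /\<^sub>R fact k)" for k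
  proof (cases "even k")
    case True then show ?thesis using nn[of k] by (simp add: sin_coeff_def)
  next
    case odd: False
    show ?thesis
    proof (cases "Suc k < 2 * X")
      case True
      from odd obtain m where "Suc k = 2 * m" by (metis even_Suc evenE)
      with True van[of m] have "D (Suc k) = 0" by (simp add: D_def)
      then show ?thesis using nn[of k] by simp
    next
      case False
      then have k: "2 * X - 1 \<le> k" by simp
      have cc: "\<bar>sin_coeff k\<bar> = 1 / fact k" using odd by (simp add: sin_coeff_def abs_mult power_abs)
      have "\<bar>sin_coeff k * (2 * t) ^ k * D (Suc k)\<bar> = (1 / fact k) * (2 * \<bar>t\<bar>) ^ k * \<bar>D (Suc k)\<bar>"
        by (simp add: abs_mult cc power_abs)
      also have "\<dots> \<le> (1 / fact k) * (2 * \<bar>t\<bar>) ^ k * (real (card I) * c ^ Suc k)"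
        by (intro mult_left_mono Dle) auto
      also have "\<dots> = real (card I) * c / fact k * z ^ k"
        by (simp add: z_def power_mult_distrib)
      also have "\<dots> \<le> real (card I) * c / fact k * ((\<beta> * z) ^ k / \<beta> ^ (2 * X - 1))"
      proof (cases "I = {}")
        case True then show ?thesis by simp
      next
        case False
        show ?thesis
          by (intro mult_left_mono pow_ratio_le \<beta> k) (use c0[OF False] in \<open>auto simp: z_def\<close>)
      qed
      also have "\<dots> = real (card I) * c / \<beta> ^ (2 * X - 1) * ((\<beta> * z) ^ k /\<^sub>R fact k)"
        by (simp add: divide_inverse mult_ac)
      finally show ?thesis .
    qed
  qed
  have "\<bar>\<Sum>i\<in>I. sin (2 * G i * t) * (G i * C i)\<bar> \<le> real (card I) * c / \<beta> ^ (2 * X - 1) * exp (\<beta> * z)"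
    by (rule sums_abs_le[OF sums1 sums2]) (simp only: eq bnd)
  then show ?thesis by (simp add: z_def mult_ac)
qed

lemma chernoff_scalar:
  fixes p :: nat and u z :: real
  assumes p: "p \<ge> 1" and u: "0 < u" "u \<le> exp (-1)" and z: "0 < z" "z < u * p"
  shows "exp (real p / z * z) / (real p / z) ^ p \<le> exp (z - u * p)"
proof -
  define r where "r = z / p"
  have pp: "real p > 0" using p by simp
  have r0: "0 < r" and ru: "r < u" using z pp by (auto simp: r_def field_simps)
  have lnu: "ln u \<le> -1" using u by (metis ln_exp ln_le_cancel_iff exp_gt_zero)
  have "ln (r / u) \<le> r / u - 1" using r0 u by (intro ln_le_minus_one) auto
  moreover have "ln r = ln u + ln (r / u)" using r0 u by (simp add: ln_div)
  ultimately have a: "1 + ln r \<le> r / u - 1" using lnu by linarith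
  have "r / u - 1 \<le> r - u"
  proof -
    have "exp (-1::real) \<le> 1" by simp
    then have u1: "u \<le> 1" using u by linarith
    have "r * (1 - u) \<le> u * (1 - u)" using ru u1
      by (intro mult_right_mono) auto
    then have "r - r * u \<le> u - u * u" by (simp add: algebra_simps)
    then show ?thesis using u by (simp add: field_simps)
  qed
  with a have key: "1 + ln r \<le> r - u" by linarith
  have "(real p / z) ^ p = exp (real p * ln (real p / z))"
    using pp z by (simp add: exp_ln_iff[THEN iffD2] exp_of_nat_mult[symmetric] ln_realpow[symmetric] del: exp_of_nat_mult)
  moreover have "ln (real p / z) = - ln r" using pp z by (simp add: r_def ln_div)
  ultimately have "exp (real p / z * z) / (real p / z) ^ p = exp (real p * (1 + ln r))"
    using z pp by (simp add: exp_diff[symmetric] exp_minus field_simps exp_add)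
  also have "\<dots> \<le> exp (real p * (r - u))" using key pp by (intro exp_mono mult_left_mono) auto
  also have "real p * (r - u) = z - u * p" using pp by (simp add: r_def field_simps)
  finally show ?thesis .
qed


lemma exp_half_pow: "exp ((\<mu>::real) / 2) ^ (2 * X) = exp (\<mu> * real X)"
  by (simp add: exp_of_nat_mult[symmetric] mult_ac)

lemma mu_small_facts:
  fixes \<mu> :: real
  assumes "\<mu> > 0" "\<mu> * exp 1 < 2"
  shows "\<mu> / 2 \<le> exp (-1)" "\<mu> < 2"
proof -
  show "\<mu> / 2 \<le> exp (-1)" using assms by (simp add: exp_minus field_simps)
  have "exp (1::real) \<ge> 1" by simp
  then have "\<mu> * 1 \<le> \<mu> * exp 1" using assms by (intro mult_left_mono) auto
  then show "\<mu> < 2" using assms by linarith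
qed

lemma b_le_Q:
  fixes \<mu> Q :: real
  assumes "\<mu> > 0" "Q \<ge> \<mu> * exp (\<mu> / 2 + 1)" "\<mu> * exp 1 \<ge> 2"
  shows "exp (\<mu> / 2) \<le> Q / 2"
proof -
  have q: "\<mu> * exp 1 * exp (\<mu> / 2) \<le> Q" using assms(2) by (simp add: exp_add mult_ac)
  have "2 * exp (\<mu> / 2) \<le> \<mu> * exp 1 * exp (\<mu> / 2)" using assms(3) by (intro mult_right_mono) auto
  then show ?thesis using q by linarith
qed

lemma T0_scalar:
  fixes X :: nat and z \<mu> Q Z :: real
  assumes \<mu>: "\<mu> > 0" and z: "z \<ge> 0" and Q2: "Q \<ge> 2" and Qe: "Q \<ge> \<mu> * exp (\<mu> / 2 + 1)"
    and Z1: "Z \<le> 1" and H: "\<And>\<beta>. \<beta> \<ge> 1 \<Longrightarrow> Z \<le> exp (\<beta> * z) / \<beta> ^ (2 * X)"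
  shows "Z \<le> exp (- \<mu> * real X + Q * z / 2)"
proof -
  define b where "b = exp (\<mu> / 2)"
  have b1: "b \<ge> 1" using \<mu> by (simp add: b_def)
  have viab: "Z \<le> exp (b * z - \<mu> * real X)"
    using H[OF b1] by (simp add: b_def exp_half_pow exp_diff)
  show ?thesis
  proof (cases "\<mu> * exp 1 \<ge> 2 \<or> z = 0")
    case True
    have "b * z \<le> Q * z / 2"
    proof (cases "z = 0")
      case False
      with True have "b \<le> Q / 2" using b_le_Q[OF \<mu> Qe] by (simp add: b_def)
      then have "b * 2 \<le> Q" by simp
      from mult_right_mono[OF this z] show ?thesis by simp
    qed simp
    then have "exp (b * z - \<mu> * real X) \<le> exp (- \<mu> * real X + Q * z / 2)" by simp
    then show ?thesis using viab by linarith
  next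
    case False
    then have small: "\<mu> * exp 1 < 2" and zp: "z > 0" using z by auto
    show ?thesis
    proof (cases "z \<ge> \<mu> * real X")
      case True
      have "Q * z / 2 \<ge> z" using mult_right_mono[OF Q2 z] by simp
      then have "0 \<le> - \<mu> * real X + Q * z / 2" using True by linarith
      then show ?thesis using Z1 by (smt (verit) one_le_exp_iff)
    next
      case False
      then have zl: "z < \<mu> / 2 * real (2 * X)" by simp
      have X1: "2 * X \<ge> 1" using zl zp \<mu> by (cases X) auto
      have "real (2 * X) / z \<ge> 1"
      proof -
        have "\<mu> / 2 * real (2 * X) \<le> 1 * real (2 * X)" using mu_small_facts(2)[OF \<mu> small]
          by (intro mult_right_mono) auto
        then have "z < real (2 * X)" using zl by linarith
        then show ?thesis using zp by (simp add: field_simps)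
      qed
      from H[OF this] have "Z \<le> exp (real (2 * X) / z * z) / (real (2 * X) / z) ^ (2 * X)" .
      also have "\<dots> \<le> exp (z - \<mu> / 2 * real (2 * X))"
        by (rule chernoff_scalar[OF X1 _ mu_small_facts(1)[OF \<mu> small] zp zl]) (use \<mu> in simp)
      also have "\<dots> \<le> exp (- \<mu> * real X + Q * z / 2)"
        using mult_right_mono[OF Q2 z] by (intro exp_mono) simp
      finally show ?thesis .
    qed
  qed
qed

lemma T1_scalar:
  fixes X :: nat and z \<mu> Q Z c :: real
  assumes \<mu>: "\<mu> > 0" and z: "z \<ge> 0" and Q2: "Q \<ge> 2" and Qe: "Q \<ge> \<mu> * exp (\<mu> / 2 + 1)"
    and c: "c \<ge> 0" and Z1: "Z \<le> c"
    and H: "\<And>\<beta>. \<beta> \<ge> 1 \<Longrightarrow> X \<ge> 1 \<Longrightarrow> Z \<le> c * exp (\<beta> * z) / \<beta> ^ (2 * X - 1)"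
  shows "Z \<le> c * exp (\<mu> / 2) * exp (- \<mu> * real X + Q * z / 2)"
proof -
  define b where "b = exp (\<mu> / 2)"
  have b1: "b \<ge> 1" using \<mu> by (simp add: b_def)
  have Qz: "Q * z / 2 \<ge> z" using mult_right_mono[OF Q2 z] by simp
  show ?thesis
  proof (cases "X = 0")
    case True
    have "1 \<le> exp (\<mu> / 2) * exp (Q * z / 2)" using \<mu> Q2 z
      by (metis exp_add le_add_same_cancel1 one_le_exp_iff Qz order.trans add_nonneg_nonneg less_imp_le divide_nonneg_pos zero_less_numeral)
    then have "c * 1 \<le> c * (exp (\<mu> / 2) * exp (Q * z / 2))" using c by (rule mult_left_mono)
    then show ?thesis using Z1 True by (simp add: mult_ac)
  next
    case False
    then have X1: "X \<ge> 1" by simp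
    have pw: "b ^ (2 * X - 1) * b = b ^ (2 * X)" using X1
      by (metis Suc_diff_1 mult_pos_pos pos2 power_Suc2 less_le_trans zero_less_one le_numeral_extra(4))
    have viab: "Z \<le> c * b * exp (b * z - \<mu> * real X)"
    proof -
      have "Z \<le> c * exp (b * z) / b ^ (2 * X - 1)" using H[OF b1 X1] .
      also have "\<dots> = c * b * (exp (b * z) / b ^ (2 * X))" using b1 pw[symmetric]
        by (simp add: field_simps)
      also have "\<dots> = c * b * exp (b * z - \<mu> * real X)" by (simp add: b_def exp_half_pow exp_diff)
      finally show ?thesis .
    qed
    show ?thesis
    proof (cases "\<mu> * exp 1 \<ge> 2 \<or> z = 0")
      case True
      have "b * z \<le> Q * z / 2"
      proof (cases "z = 0")
        case False
        with True have "b \<le> Q / 2" using b_le_Q[OF \<mu> Qe] by (simp add: b_def)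
        then have "b * 2 \<le> Q" by simp
      from mult_right_mono[OF this z] show ?thesis by simp
      qed simp
      then have "exp (b * z - \<mu> * real X) \<le> exp (- \<mu> * real X + Q * z / 2)" by simp
      then have "c * b * exp (b * z - \<mu> * real X) \<le> c * b * exp (- \<mu> * real X + Q * z / 2)"
        using c b1 by (intro mult_left_mono) auto
      then show ?thesis using viab by (simp add: b_def)
    next
      case False
      then have small: "\<mu> * exp 1 < 2" and zp: "z > 0" using z by auto
      show ?thesis
      proof (cases "z \<ge> \<mu> * real X - \<mu> / 2")
        case True
        then have "0 \<le> \<mu> / 2 + (- \<mu> * real X + Q * z / 2)" using Qz by linarith
        then have "1 \<le> exp (\<mu> / 2) * exp (- \<mu> * real X + Q * z / 2)"
          by (metis exp_add one_le_exp_iff)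
        then have "c * 1 \<le> c * (exp (\<mu> / 2) * exp (- \<mu> * real X + Q * z / 2))" using c by (rule mult_left_mono)
        then show ?thesis using Z1 by (simp add: mult_ac)
      next
        case False
        have X1': "2 * X - 1 \<ge> 1" using False zp \<mu> X1 by (cases X) auto
        have rp: "real (2 * X - 1) = 2 * real X - 1" using X1 by (simp add: of_nat_diff)
        have "\<mu> / 2 * real (2 * X - 1) = \<mu> * real X - \<mu> / 2" unfolding rp by (simp add: algebra_simps)
        then have zl: "z < \<mu> / 2 * real (2 * X - 1)" using False by linarith
        have "real (2 * X - 1) / z \<ge> 1"
        proof -
          have "\<mu> / 2 * real (2 * X - 1) \<le> 1 * real (2 * X - 1)" using mu_small_facts(2)[OF \<mu> small]
            by (intro mult_right_mono) auto
          then have "z < real (2 * X - 1)" using zl by linarith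
          then show ?thesis using zp by (simp add: field_simps)
        qed
        from H[OF this X1] have "Z \<le> c * exp (real (2 * X - 1) / z * z) / (real (2 * X - 1) / z) ^ (2 * X - 1)" .
        also have "\<dots> = c * (exp (real (2 * X - 1) / z * z) / (real (2 * X - 1) / z) ^ (2 * X - 1))" by simp
        also have "\<dots> \<le> c * exp (z - \<mu> / 2 * real (2 * X - 1))"
          by (intro mult_left_mono c chernoff_scalar[OF X1' _ mu_small_facts(1)[OF \<mu> small] zp zl]) (use \<mu> c in auto)
        also have "z - \<mu> / 2 * real (2 * X - 1) = \<mu> / 2 + (- \<mu> * real X + z)" unfolding rp by (simp add: algebra_simps)
        also have "c * exp (\<mu> / 2 + (- \<mu> * real X + z)) \<le> c * exp (\<mu> / 2) * exp (- \<mu> * real X + Q * z / 2)"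
          using Qz c by (simp add: exp_add mult.assoc mult_left_mono)
        finally show ?thesis .
      qed
    qed
  qed
qed


lemma deriv_bound_pos:
  fixes f f' :: "real \<Rightarrow> real"
  assumes D: "\<And>s. (f has_real_derivative f' s) (at s)"
    and f0: "f 0 = 0" and B: "\<And>s. \<bar>f' s\<bar> \<le> 2 * A * exp (R * \<bar>s\<bar>)"
    and A: "A \<ge> 0" and c: "c > 0" and R: "R \<ge> 2 * c" and t: "t \<ge> 0"
  shows "\<bar>f t\<bar> \<le> A * exp (R * t) / c"
proof -
  have dd: "A * R * exp (R * s) / c \<ge> 2 * A * exp (R * s)" for s
  proof -
    have "A * exp (R * s) * (2 * c) \<le> A * exp (R * s) * R" using A R by (intro mult_left_mono) auto
    then show ?thesis using c by (simp add: field_simps)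
  qed
  have dPhi: "((\<lambda>s. A * exp (R * s) / c) has_real_derivative A * R * exp (R * s) / c) (at s)" for s
    using c by (auto intro!: derivative_eq_intros simp: field_simps)
  have "(\<lambda>s. A * exp (R * s) / c - f s) 0 \<le> (\<lambda>s. A * exp (R * s) / c - f s) t"
  proof (rule DERIV_nonneg_imp_nondecreasing[OF t])
    fix s :: real assume s: "0 \<le> s" "s \<le> t"
    show "\<exists>y. ((\<lambda>s. A * exp (R * s) / c - f s) has_real_derivative y) (at s) \<and> 0 \<le> y"
    proof (intro exI conjI)
      show "((\<lambda>s. A * exp (R * s) / c - f s) has_real_derivative A * R * exp (R * s) / c - f' s) (at s)"
        by (rule DERIV_diff[OF dPhi D])
      show "0 \<le> A * R * exp (R * s) / c - f' s" using dd[of s] B[of s] s by (auto simp: abs_le_iff)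
    qed
  qed
  then have "A / c \<le> A * exp (R * t) / c - f t" using f0 by simp
  then have 1: "f t \<le> A * exp (R * t) / c" using divide_nonneg_pos[OF A c] by linarith
  have "(\<lambda>s. A * exp (R * s) / c + f s) 0 \<le> (\<lambda>s. A * exp (R * s) / c + f s) t"
  proof (rule DERIV_nonneg_imp_nondecreasing[OF t])
    fix s :: real assume s: "0 \<le> s" "s \<le> t"
    show "\<exists>y. ((\<lambda>s. A * exp (R * s) / c + f s) has_real_derivative y) (at s) \<and> 0 \<le> y"
    proof (intro exI conjI)
      show "((\<lambda>s. A * exp (R * s) / c + f s) has_real_derivative A * R * exp (R * s) / c + f' s) (at s)"
        by (rule DERIV_add[OF dPhi D])
      show "0 \<le> A * R * exp (R * s) / c + f' s" using dd[of s] B[of s] s by (auto simp: abs_le_iff)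
    qed
  qed
  then have "A / c \<le> A * exp (R * t) / c + f t" using f0 by simp
  then have 2: "- f t \<le> A * exp (R * t) / c" using divide_nonneg_pos[OF A c] by linarith
  from 1 2 show ?thesis by linarith
qed

lemma deriv_bound:
  fixes f f' :: "real \<Rightarrow> real"
  assumes D: "\<And>s. (f has_real_derivative f' s) (at s)"
    and f0: "f 0 = 0" and odd: "\<And>s. f (- s) = - f s" and B: "\<And>s. \<bar>f' s\<bar> \<le> 2 * A * exp (R * \<bar>s\<bar>)"
    and A: "A \<ge> 0" and c: "c > 0" and R: "R \<ge> 2 * c"
  shows "\<bar>f t\<bar> \<le> A * exp (R * \<bar>t\<bar>) / c"
proof (cases "t \<ge> 0")
  case True then show ?thesis using deriv_bound_pos[OF D f0 B A c R True] by simp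
next
  case False
  then have "\<bar>f (- t)\<bar> \<le> A * exp (R * (- t)) / c" using deriv_bound_pos[OF D f0 B A c R, of "-t"] by simp
  then show ?thesis using False odd[of t] by simp
qed


lemma gn_bounds:
  assumes \<omega>: "\<omega> > 0" and lam: "\<forall>j. lam j \<ge> 0"
  shows "\<omega> \<le> gn \<omega> lam L n" "gn \<omega> lam L n \<le> c_wl \<omega> lam"
proof -
  have s0: "0 \<le> (\<Sum>j\<in>UNIV. lam j * (sin (kk L n j / 2))^2)"
    using lam by (intro sum_nonneg mult_nonneg_nonneg) auto
  have s1: "(\<Sum>j\<in>UNIV. lam j * (sin (kk L n j / 2))^2) \<le> (\<Sum>j\<in>UNIV. lam j)"
  proof (rule sum_mono)
    fix j
    have "(sin (kk L n j / 2))^2 \<le> 1" by (simp add: abs_square_le_1)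
    then show "lam j * (sin (kk L n j / 2))^2 \<le> lam j" using lam mult_left_mono[of _ 1 "lam j"] by fastforce
  qed
  have "sqrt (\<omega>^2) \<le> gn \<omega> lam L n" unfolding gn_def gam_def
    using s0 by (intro real_sqrt_le_mono) simp
  then show "\<omega> \<le> gn \<omega> lam L n" using \<omega> by simp
  show "gn \<omega> lam L n \<le> c_wl \<omega> lam" unfolding gn_def gam_def c_wl_def
    using s1 by (intro real_sqrt_le_mono) simp
qed

lemma avg_eq:
  fixes x :: "'n::finite \<Rightarrow> int"
  assumes L: "L > 0"
  shows "avg \<omega> lam L g t x = complex_of_real (1 / real (card (Lam L :: ('n \<Rightarrow> int) set))) *
     (\<Sum>n\<in>Lam L. complex_of_real (g (kk L n)) * cis (dotp (kk L n) x - 2 * gn \<omega> lam L n * t))"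
proof -
  have ls: "Lam_star L = kk L ` (Lam L :: ('n \<Rightarrow> int) set)"
    unfolding Lam_star_def kk_def ..
  have inj: "inj_on (kk L) (Lam L :: ('n \<Rightarrow> int) set)"
  proof (rule inj_onI)
    fix a b :: "'n \<Rightarrow> int" assume "kk L a = kk L b"
    then have "pi * real_of_int (a j) / real L = pi * real_of_int (b j) / real L" for j
      unfolding kk_def by metis
    then show "a = b" using L by (auto simp: fun_eq_iff)
  qed
  have ex: "exp (\<i> * complex_of_real a - 2 * \<i> * complex_of_real b * complex_of_real t) = cis (a - 2 * b * t)" for a b
    by (simp add: cis_conv_exp algebra_simps)
  show ?thesis
    unfolding avg_def ls sum.reindex[OF inj] by (simp add: ex gn_def)
qed

lemma Re_avg1:
  fixes x :: "'n::finite \<Rightarrow> int"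
  assumes L: "L > 0"
  shows "Re (avg \<omega> lam L (\<lambda>k. 1) t x) = (\<Sum>n\<in>Lam L. cos (2 * gn \<omega> lam L n * t) * cos (dotp (kk L n) x)) / real (card (Lam L :: ('n \<Rightarrow> int) set))"
proof -
  have "(\<Sum>n\<in>Lam L. cos (dotp (kk L n) x - 2 * gn \<omega> lam L n * t))
      = (\<Sum>n\<in>Lam L. cos (2 * gn \<omega> lam L n * t) * cos (dotp (kk L n) x)) + (\<Sum>n\<in>Lam L. sin (2 * gn \<omega> lam L n * t) * sin (dotp (kk L n) x))"
    by (simp add: cos_diff sum.distrib mult.commute)
  also have "(\<Sum>n\<in>Lam L. sin (2 * gn \<omega> lam L n * t) * sin (dotp (kk L n) x)) = 0"
    using sin_sum_zero[OF L, where \<psi>="\<lambda>g. sin (2 * g * t)" and \<omega>=\<omega> and lam=lam and x=x] by simp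
  finally show ?thesis by (simp add: avg_eq[OF L])
qed

lemma Im_avg2:
  fixes x :: "'n::finite \<Rightarrow> int" and s :: real
  assumes L: "L > 0"
  shows "Im (avg \<omega> lam L (\<lambda>k. gam \<omega> lam k + s / gam \<omega> lam k) t x) =
    - ((\<Sum>n\<in>Lam L. gn \<omega> lam L n * sin (2 * gn \<omega> lam L n * t) * cos (dotp (kk L n) x))
      + s * (\<Sum>n\<in>Lam L. sin (2 * gn \<omega> lam L n * t) / gn \<omega> lam L n * cos (dotp (kk L n) x)))
     / real (card (Lam L :: ('n \<Rightarrow> int) set))"
proof -
  define g where "g n = gn \<omega> lam L n" for n
  have "(\<Sum>n\<in>Lam L. (g n + s / g n) * sin (dotp (kk L n) x - 2 * g n * t))
      = (\<Sum>n\<in>Lam L. (g n + s / g n) * cos (2 * g n * t) * sin (dotp (kk L n) x))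
        - (\<Sum>n\<in>Lam L. (g n + s / g n) * sin (2 * g n * t) * cos (dotp (kk L n) x))"
    by (simp add: sin_diff sum_subtractf algebra_simps)
  also have "(\<Sum>n\<in>Lam L. (g n + s / g n) * cos (2 * g n * t) * sin (dotp (kk L n) x)) = 0"
    using sin_sum_zero[OF L, where \<psi>="\<lambda>g. (g + s / g) * cos (2 * g * t)" and \<omega>=\<omega> and lam=lam and x=x] by (simp add: g_def)
  also have "(\<Sum>n\<in>Lam L. (g n + s / g n) * sin (2 * g n * t) * cos (dotp (kk L n) x))
      = (\<Sum>n\<in>Lam L. g n * sin (2 * g n * t) * cos (dotp (kk L n) x))
        + s * (\<Sum>n\<in>Lam L. sin (2 * g n * t) / g n * cos (dotp (kk L n) x))"
    by (simp add: sum.distrib sum_distrib_left algebra_simps)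
  finally have e: "(\<Sum>n\<in>Lam L. (g n + s / g n) * sin (dotp (kk L n) x - 2 * g n * t)) =
    - ((\<Sum>n\<in>Lam L. g n * sin (2 * g n * t) * cos (dotp (kk L n) x))
        + s * (\<Sum>n\<in>Lam L. sin (2 * g n * t) / g n * cos (dotp (kk L n) x)))" by simp
  show ?thesis using e by (simp add: avg_eq[OF L] g_def gn_def)
qed


lemma lin_help2:
  fixes A p q r E P R :: real
  assumes "A \<le> p + q" "p \<le> P" "q \<le> R" "r \<le> E"
  shows "A / 2 + r \<le> E + P / 2 + R / 2" "0 \<le> r \<Longrightarrow> A / 2 \<le> E + P / 2 + R / 2"
  using assms by linarith+

lemma final_combine:
  fixes N c b E t0 t1 t2 :: real
  assumes N: "N > 0" and c: "c > 0" and b: "b \<ge> 0" and E: "E \<ge> 0"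
    and h0: "\<bar>t0\<bar> \<le> N * E" and h1: "\<bar>t1\<bar> \<le> N * (c * b * E)" and h2: "\<bar>t2\<bar> \<le> N * E / c"
  shows "\<bar>(t1 + t2) / N\<bar> / 2 + \<bar>t0 / N\<bar> \<le> (1 + c * b / 2 + 1 / (2 * c)) * E"
    and "\<bar>(t1 - t2) / N\<bar> / 2 \<le> (1 + c * b / 2 + 1 / (2 * c)) * E"
proof -
  have a0: "\<bar>t0 / N\<bar> \<le> E" using h0 N by (simp add: abs_divide pos_divide_le_eq mult.commute)
  have a1: "\<bar>t1 / N\<bar> \<le> c * b * E" using h1 N by (simp add: abs_divide pos_divide_le_eq mult.commute)
  have a2: "\<bar>t2 / N\<bar> \<le> E / c" using h2 N by (simp add: abs_divide pos_divide_le_eq mult.commute)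
  have s1: "\<bar>(t1 + t2) / N\<bar> \<le> \<bar>t1 / N\<bar> + \<bar>t2 / N\<bar>" by (metis abs_triangle_ineq add_divide_distrib)
  have s2: "\<bar>(t1 - t2) / N\<bar> \<le> \<bar>t1 / N\<bar> + \<bar>t2 / N\<bar>" by (metis abs_triangle_ineq4 diff_divide_distrib)
  define P where "P = c * b * E"
  define R where "R = E / c"
  have eq: "(1 + c * b / 2 + 1 / (2 * c)) * E = E + P / 2 + R / 2" using c by (simp add: field_simps P_def R_def)
  note a1 = a1[folded P_def] and a2 = a2[folded R_def]
  show "\<bar>(t1 + t2) / N\<bar> / 2 + \<bar>t0 / N\<bar> \<le> (1 + c * b / 2 + 1 / (2 * c)) * E"
    unfolding eq using lin_help2[OF s1 a1 a2 a0] by simp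
  show "\<bar>(t1 - t2) / N\<bar> / 2 \<le> (1 + c * b / 2 + 1 / (2 * c)) * E"
    unfolding eq using lin_help2[OF s2 a1 a2 a0] E by simp
qed

theorem lemma3p4:
  fixes \<omega> :: real and lam :: "'n::finite \<Rightarrow> real" and L :: nat
    and \<mu> t :: real and x :: "'n \<Rightarrow> int"
  assumes "\<omega> > 0" and "\<forall>j. lam j \<ge> 0" and "L > 0"
    and "\<mu> > 0" and "x \<in> Lam L"
  shows "\<forall>h \<in> {h1 \<omega> lam L t x, h2 \<omega> lam L t x}.
           cmod h \<le> (1 + c_wl \<omega> lam * exp (\<mu> / 2) / 2 + 1 / (2 * c_wl \<omega> lam)) *
             exp (- \<mu> * (l1norm x - c_wl \<omega> lam * max (2 / \<mu>) (exp (\<mu> / 2 + 1)) * \<bar>t\<bar>))"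
proof -
  note \<omega> = assms(1) and lam = assms(2) and L = assms(3) and \<mu> = assms(4) and x = assms(5)
  define N where "N = real (card (Lam L :: ('n \<Rightarrow> int) set))"
  define g where "g n = gn \<omega> lam L n" for n
  define C where "C n = cos (dotp (kk L n) x)" for n
  define c where "c = c_wl \<omega> lam"
  define M where "M = max (2 / \<mu>) (exp (\<mu> / 2 + 1))"
  define Q where "Q = \<mu> * M"
  define X where "X = nat (\<Sum>j\<in>UNIV. \<bar>x j\<bar>)"
  have Xr: "l1norm x = real X"
  proof -
    have "l1norm x = real_of_int (\<Sum>j\<in>UNIV. \<bar>x j\<bar>)" by (simp add: l1norm_def)
    moreover have "(\<Sum>j\<in>UNIV. \<bar>x j\<bar>) \<ge> 0" by (simp add: sum_nonneg)
    ultimately show ?thesis by (simp add: X_def)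
  qed
  have N0: "N > 0" unfolding N_def using Lam_finite zero_Lam[OF L] by (auto simp: card_gt_0_iff)
  have gb: "\<omega> \<le> g n" "g n \<le> c" for n using gn_bounds[OF \<omega> lam] by (auto simp: g_def c_def)
  have gp: "g n > 0" for n using gb(1)[of n] \<omega> by linarith
  have c0: "c > 0" using gb[of undefined] \<omega> by linarith
  have Cb: "\<bar>C n\<bar> \<le> 1" for n by (simp add: C_def)
  have van: "(\<Sum>n\<in>Lam L. g n ^ (2 * m) * C n) = 0" if "m < X" for m
    using D_vanish[OF L lam x, of m \<omega>] that by (simp add: Xr g_def C_def)
  have Q2: "Q \<ge> 2" using \<mu> by (simp add: Q_def M_def max_def field_simps)
  have Qe: "Q \<ge> \<mu> * exp (\<mu> / 2 + 1)" using \<mu> by (simp add: Q_def M_def)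
  have T0: "\<bar>\<Sum>n\<in>Lam L. cos (2 * g n * s) * C n\<bar> \<le> N * exp (- \<mu> * real X + Q * (2 * c * \<bar>s\<bar>) / 2)" for s
  proof -
    define Z where "Z = \<bar>\<Sum>n\<in>Lam L. cos (2 * g n * s) * C n\<bar> / N"
    have "\<bar>\<Sum>n\<in>Lam L. cos (2 * g n * s) * C n\<bar> \<le> (\<Sum>n\<in>Lam L. \<bar>cos (2 * g n * s) * C n\<bar>)"
      by (rule sum_abs)
    also have "\<dots> \<le> (\<Sum>n\<in>(Lam L :: ('n \<Rightarrow> int) set). (1::real))"
    proof (rule sum_mono)
      fix n
      have "\<bar>cos (2 * g n * s) * C n\<bar> = \<bar>cos (2 * g n * s)\<bar> * \<bar>C n\<bar>" by (simp add: abs_mult)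
      also have "\<dots> \<le> 1" using Cb[of n] by (intro mult_le_one) auto
      finally show "\<bar>cos (2 * g n * s) * C n\<bar> \<le> 1" .
    qed
    finally have "\<bar>\<Sum>n\<in>Lam L. cos (2 * g n * s) * C n\<bar> \<le> (\<Sum>n\<in>(Lam L :: ('n \<Rightarrow> int) set). (1::real))" .
    then have Z1: "Z \<le> 1" using N0 by (simp add: Z_def N_def)
    have H: "Z \<le> exp (\<beta> * (2 * c * \<bar>s\<bar>)) / \<beta> ^ (2 * X)" if "\<beta> \<ge> 1" for \<beta>
    proof -
      have "\<bar>\<Sum>n\<in>Lam L. cos (2 * g n * s) * C n\<bar> \<le> N * exp (\<beta> * (2 * c * \<bar>s\<bar>)) / \<beta> ^ (2 * X)"
        unfolding N_def
        by (rule cos_series_bound[OF Lam_finite _ Cb van that]) (use gb gp in \<open>auto intro: less_imp_le\<close>)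
      then show ?thesis using N0 by (simp add: Z_def field_simps)
    qed
    have "Z \<le> exp (- \<mu> * real X + Q * (2 * c * \<bar>s\<bar>) / 2)"
      by (rule T0_scalar[OF \<mu> _ Q2 Qe Z1 H]) (use c0 in auto)
    then show ?thesis using N0 by (simp add: Z_def field_simps)
  qed
  have T1: "\<bar>\<Sum>n\<in>Lam L. g n * sin (2 * g n * t) * C n\<bar> \<le> N * (c * exp (\<mu> / 2) * exp (- \<mu> * real X + Q * (2 * c * \<bar>t\<bar>) / 2))"
  proof -
    define Z where "Z = \<bar>\<Sum>n\<in>Lam L. g n * sin (2 * g n * t) * C n\<bar> / N"
    have "\<bar>\<Sum>n\<in>Lam L. g n * sin (2 * g n * t) * C n\<bar> \<le> (\<Sum>n\<in>(Lam L :: ('n \<Rightarrow> int) set). c)"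
    proof (rule order.trans[OF sum_abs sum_mono])
      fix n
      have "\<bar>g n * sin (2 * g n * t) * C n\<bar> = g n * (\<bar>sin (2 * g n * t)\<bar> * \<bar>C n\<bar>)"
        using gp[of n] by (simp add: abs_mult)
      also have "\<dots> \<le> c * 1" using gb[of n] gp[of n] Cb[of n]
        by (intro mult_mono mult_le_one) auto
      finally show "\<bar>g n * sin (2 * g n * t) * C n\<bar> \<le> c" by simp
    qed
    then have Z1: "Z \<le> c" using N0 by (simp add: Z_def N_def field_simps)
    have H: "Z \<le> c * exp (\<beta> * (2 * c * \<bar>t\<bar>)) / \<beta> ^ (2 * X - 1)" if "\<beta> \<ge> 1" "X \<ge> 1" for \<beta>
    proof -
      have "\<bar>\<Sum>n\<in>Lam L. g n * sin (2 * g n * t) * C n\<bar> \<le> N * c * exp (\<beta> * (2 * c * \<bar>t\<bar>)) / \<beta> ^ (2 * X - 1)"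
        unfolding N_def
        by (rule sin_series_bound[OF Lam_finite _ Cb van that]) (use gb gp in \<open>auto intro: less_imp_le\<close>)
      then show ?thesis using N0 by (simp add: Z_def field_simps)
    qed
    have "Z \<le> c * exp (\<mu> / 2) * exp (- \<mu> * real X + Q * (2 * c * \<bar>t\<bar>) / 2)"
      by (rule T1_scalar[OF \<mu> _ Q2 Qe _ Z1 H]) (use c0 in auto)
    then show ?thesis using N0 by (simp add: Z_def field_simps)
  qed
  have T2: "\<bar>\<Sum>n\<in>Lam L. sin (2 * g n * t) / g n * C n\<bar> \<le> N * exp (- \<mu> * real X) * exp (Q * c * \<bar>t\<bar>) / c"
  proof -
    define f where "f s = (\<Sum>n\<in>Lam L. sin (2 * g n * s) / g n * C n)" for s
    define f' where "f' s = (\<Sum>n\<in>Lam L. 2 * cos (2 * g n * s) * C n)" for s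
    have D: "(f has_real_derivative f' s) (at s)" for s
    proof -
      have "((\<lambda>s. \<Sum>n\<in>Lam L. sin (2 * g n * s) / g n * C n) has_real_derivative
          (\<Sum>n\<in>Lam L. cos (2 * g n * s) * (2 * g n) / g n * C n)) (at s)"
        by (rule DERIV_sum) (auto intro!: derivative_eq_intros)
      moreover have "(\<Sum>n\<in>Lam L. cos (2 * g n * s) * (2 * g n) / g n * C n) = f' s"
      proof -
        have gne: "g n \<noteq> 0" for n using gp[of n] by simp
        show ?thesis unfolding f'_def by (rule sum.cong) (auto simp: gne)
      qed
      ultimately show ?thesis unfolding f_def by simp
    qed
    have f0: "f 0 = 0" by (simp add: f_def)
    have odd: "f (- s) = - f s" for s by (simp add: f_def sum_negf)
    have B: "\<bar>f' s\<bar> \<le> 2 * (N * exp (- \<mu> * real X)) * exp (Q * c * \<bar>s\<bar>)" for s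
    proof -
      have "\<bar>f' s\<bar> = 2 * \<bar>\<Sum>n\<in>Lam L. cos (2 * g n * s) * C n\<bar>"
        by (simp add: f'_def sum_distrib_left[symmetric] mult.assoc abs_mult)
      also have "\<dots> \<le> 2 * (N * exp (- \<mu> * real X + Q * (2 * c * \<bar>s\<bar>) / 2))" using T0[of s] by simp
      also have "\<dots> = 2 * (N * exp (- \<mu> * real X)) * exp (Q * c * \<bar>s\<bar>)" by (simp add: exp_add[symmetric])
      finally show ?thesis .
    qed
    have "\<bar>f t\<bar> \<le> N * exp (- \<mu> * real X) * exp (Q * c * \<bar>t\<bar>) / c"
      by (rule deriv_bound[OF D f0 odd B]) (use N0 c0 Q2 mult_right_mono[OF Q2, of c] in auto)
    then show ?thesis by (simp add: f_def)
  qed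
  define E where "E = exp (- \<mu> * (l1norm x - c * M * \<bar>t\<bar>))"
  have Eeq: "E = exp (- \<mu> * real X + Q * (2 * c * \<bar>t\<bar>) / 2)"
    unfolding E_def Xr Q_def by (simp add: algebra_simps)
  have E0: "E \<ge> 0" by (simp add: E_def)
  have t2b: "\<bar>\<Sum>n\<in>Lam L. sin (2 * g n * t) / g n * C n\<bar> \<le> N * E / c"
    using T2 by (simp add: Eeq exp_add[symmetric] algebra_simps)
  have t1b: "\<bar>\<Sum>n\<in>Lam L. g n * sin (2 * g n * t) * C n\<bar> \<le> N * (c * exp (\<mu> / 2) * E)"
    using T1 by (simp add: Eeq)
  have t0b: "\<bar>\<Sum>n\<in>Lam L. cos (2 * g n * t) * C n\<bar> \<le> N * E"
    using T0[of t] by (simp add: Eeq)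
  note fc = final_combine[OF N0 c0 _ E0 t0b t1b t2b]
  have re: "Re (avg \<omega> lam L (\<lambda>k. 1) t x) = (\<Sum>n\<in>Lam L. cos (2 * g n * t) * C n) / N"
    using Re_avg1[OF L, of \<omega> lam t x] by (simp add: g_def C_def N_def)
  have im1: "Im (avg \<omega> lam L (\<lambda>k. gam \<omega> lam k + 1 / gam \<omega> lam k) t x) =
      - ((\<Sum>n\<in>Lam L. g n * sin (2 * g n * t) * C n) + (\<Sum>n\<in>Lam L. sin (2 * g n * t) / g n * C n)) / N"
    using Im_avg2[OF L, of \<omega> lam 1 t x] by (simp add: g_def C_def N_def)
  have im2: "Im (avg \<omega> lam L (\<lambda>k. gam \<omega> lam k - 1 / gam \<omega> lam k) t x) =
      - ((\<Sum>n\<in>Lam L. g n * sin (2 * g n * t) * C n) - (\<Sum>n\<in>Lam L. sin (2 * g n * t) / g n * C n)) / N"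
  proof -
    have "(\<lambda>k. gam \<omega> lam k - 1 / gam \<omega> lam k) = (\<lambda>k. gam \<omega> lam k + (-1) / gam \<omega> lam k)" by (simp add: fun_eq_iff)
    then show ?thesis using Im_avg2[OF L, of \<omega> lam "-1" t x] by (simp add: g_def C_def N_def)
  qed
  have nrm: "cmod ((\<i> / 2) * complex_of_real a + complex_of_real b) \<le> \<bar>a\<bar> / 2 + \<bar>b\<bar>" for a b
  proof -
    have "cmod ((\<i> / 2) * complex_of_real a + complex_of_real b) \<le> cmod ((\<i> / 2) * complex_of_real a) + cmod (complex_of_real b)"
      by (rule norm_triangle_ineq)
    also have "\<dots> = \<bar>a\<bar> / 2 + \<bar>b\<bar>" by (simp add: norm_mult)
    finally show ?thesis .
  qed
  have bound: "(1 + c * exp (\<mu> / 2) / 2 + 1 / (2 * c)) * E = (1 + c_wl \<omega> lam * exp (\<mu> / 2) / 2 + 1 / (2 * c_wl \<omega> lam)) *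
             exp (- \<mu> * (l1norm x - c_wl \<omega> lam * max (2 / \<mu>) (exp (\<mu> / 2 + 1)) * \<bar>t\<bar>))"
    by (simp add: c_def E_def M_def mult.assoc)
  have H1: "cmod (h1 \<omega> lam L t x) \<le> (1 + c * exp (\<mu> / 2) / 2 + 1 / (2 * c)) * E"
  proof -
    have "cmod (h1 \<omega> lam L t x) \<le> \<bar>Im (avg \<omega> lam L (\<lambda>k. gam \<omega> lam k + 1 / gam \<omega> lam k) t x)\<bar> / 2 + \<bar>Re (avg \<omega> lam L (\<lambda>k. 1) t x)\<bar>"
      unfolding h1_def by (rule nrm)
    also have "\<dots> = \<bar>((\<Sum>n\<in>Lam L. g n * sin (2 * g n * t) * C n) + (\<Sum>n\<in>Lam L. sin (2 * g n * t) / g n * C n)) / N\<bar> / 2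
        + \<bar>(\<Sum>n\<in>Lam L. cos (2 * g n * t) * C n) / N\<bar>"
      unfolding im1 re by (simp only: minus_divide_left[symmetric] abs_minus_cancel)
    also have "\<dots> \<le> (1 + c * exp (\<mu> / 2) / 2 + 1 / (2 * c)) * E" by (rule fc(1)) simp
    finally show ?thesis .
  qed
  have H2: "cmod (h2 \<omega> lam L t x) \<le> (1 + c * exp (\<mu> / 2) / 2 + 1 / (2 * c)) * E"
  proof -
    have "cmod (h2 \<omega> lam L t x) = \<bar>Im (avg \<omega> lam L (\<lambda>k. gam \<omega> lam k - 1 / gam \<omega> lam k) t x)\<bar> / 2"
      unfolding h2_def by (simp add: norm_mult)
    also have "\<dots> = \<bar>((\<Sum>n\<in>Lam L. g n * sin (2 * g n * t) * C n) - (\<Sum>n\<in>Lam L. sin (2 * g n * t) / g n * C n)) / N\<bar> / 2"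
      unfolding im2 by (simp only: minus_divide_left[symmetric] abs_minus_cancel)
    also have "\<dots> \<le> (1 + c * exp (\<mu> / 2) / 2 + 1 / (2 * c)) * E" by (rule fc(2)) simp
    finally show ?thesis .
  qed
  show ?thesis using H1 H2 unfolding bound by auto
qed

end
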